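(* Let $\mathbb{K}$ be an algebraically closed field of characteristic zero and $Y$ an irreducible affine variety. If the ideal $I\subseteq\mathbb{K}[Y]$ generated by the images $\partial(\mathbb{K}[Y])$ of all locally nilpotent derivations $\partial$ of $\mathbb{K}[Y]$ equals $\mathbb{K}[Y]$, then $Y$ is of type A, i.e. $\mathrm{HD}^*(Y\times\mathbb{A}^1)=\mathbb{K}[Y\times\mathbb{A}^1]$.
   Context: A derivation is locally nilpotent (LND) if every element is killed by some power of it. A slice of an LND $\partial$ is an element $s$ with $\partial(s)=1$. For an affine variety $X$, $\mathrm{HD}^*(X)$ is the $\mathbb{K}$-subalgebra of $\mathbb{K}[X]$ generated by the kernels of all LNDs of $\mathbb{K}[X]$ that have a slice. *)

theory Defs
  imports "HOL-Computational_Algebra.Polynomial"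
begin

definition alg_closed :: "('k::field) itself \<Rightarrow> bool" where
  "alg_closed _ \<longleftrightarrow> (\<forall>p :: 'k poly. degree p > 0 \<longrightarrow> (\<exists>x. poly p x = 0))"

definition alg_map :: "('k::field \<Rightarrow> 'b::comm_ring_1) \<Rightarrow> bool" where
  "alg_map \<iota> \<longleftrightarrow> \<iota> 1 = 1 \<and> (\<forall>a b. \<iota> (a + b) = \<iota> a + \<iota> b) \<and> (\<forall>a b. \<iota> (a * b) = \<iota> a * \<iota> b)"

inductive_set subalg :: "('k \<Rightarrow> 'b::comm_ring_1) \<Rightarrow> 'b set \<Rightarrow> 'b set"
  for \<iota> :: "'k \<Rightarrow> 'b" and S :: "'b set" where
  scalar: "\<iota> c \<in> subalg \<iota> S"
| gen: "s \<in> S \<Longrightarrow> s \<in> subalg \<iota> S"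
| add: "x \<in> subalg \<iota> S \<Longrightarrow> y \<in> subalg \<iota> S \<Longrightarrow> x + y \<in> subalg \<iota> S"
| mult: "x \<in> subalg \<iota> S \<Longrightarrow> y \<in> subalg \<iota> S \<Longrightarrow> x * y \<in> subalg \<iota> S"

definition finitely_generated_alg :: "('k \<Rightarrow> 'b::comm_ring_1) \<Rightarrow> bool" where
  "finitely_generated_alg \<iota> \<longleftrightarrow> (\<exists>S. finite S \<and> subalg \<iota> S = UNIV)"

inductive_set ideal_gen :: "'b::comm_ring_1 set \<Rightarrow> 'b set" for T :: "'b set" where
  zero: "0 \<in> ideal_gen T"
| gen: "t \<in> T \<Longrightarrow> r * t \<in> ideal_gen T"
| add: "x \<in> ideal_gen T \<Longrightarrow> y \<in> ideal_gen T \<Longrightarrow> x + y \<in> ideal_gen T"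

definition is_derivation :: "('k \<Rightarrow> 'b::comm_ring_1) \<Rightarrow> ('b \<Rightarrow> 'b) \<Rightarrow> bool" where
  "is_derivation \<iota> D \<longleftrightarrow>
     (\<forall>x y. D (x + y) = D x + D y) \<and>
     (\<forall>c x. D (\<iota> c * x) = \<iota> c * D x) \<and>
     (\<forall>x y. D (x * y) = x * D y + y * D x)"

definition is_LND :: "('k \<Rightarrow> 'b::comm_ring_1) \<Rightarrow> ('b \<Rightarrow> 'b) \<Rightarrow> bool" where
  "is_LND \<iota> D \<longleftrightarrow> is_derivation \<iota> D \<and> (\<forall>x. \<exists>n. (D ^^ n) x = 0)"

definition has_slice :: "('b::comm_ring_1 \<Rightarrow> 'b) \<Rightarrow> bool" where
  "has_slice D \<longleftrightarrow> (\<exists>s. D s = 1)"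

definition HD_star :: "('k \<Rightarrow> 'b::comm_ring_1) \<Rightarrow> 'b set" where
  "HD_star \<iota> = subalg \<iota> (\<Union>{{x. D x = 0} | D. is_LND \<iota> D \<and> has_slice D})"

definition LND_image_ideal :: "('k \<Rightarrow> 'b::comm_ring_1) \<Rightarrow> 'b set" where
  "LND_image_ideal \<iota> = ideal_gen (\<Union>{range D | D. is_LND \<iota> D})"

end

theory Submission
  imports Defs
begin


context
  fixes \<iota> :: "'k::field \<Rightarrow> 'r::comm_ring_1"
  assumes am: "alg_map \<iota>"
begin

lemma am_add: "\<iota> (a + b) = \<iota> a + \<iota> b" using am unfolding alg_map_def by blast
lemma am_mult: "\<iota> (a * b) = \<iota> a * \<iota> b" using am unfolding alg_map_def by blast
lemma am_1: "\<iota> 1 = 1" using am unfolding alg_map_def by blast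
lemma am_0: "\<iota> 0 = 0"
proof -
  have "\<iota> (0 + 0) = \<iota> 0 + \<iota> 0" by (rule am_add)
  then show ?thesis by simp
qed
lemma am_uminus: "\<iota> (- a) = - \<iota> a"
proof -
  have "\<iota> (- a + a) = \<iota> (- a) + \<iota> a" by (rule am_add)
  then have "\<iota> (- a) + \<iota> a = 0" using am_0 by simp
  then show ?thesis by (simp add: eq_neg_iff_add_eq_0)
qed
lemma am_diff: "\<iota> (a - b) = \<iota> a - \<iota> b"
  using am_add[of a "- b"] am_uminus[of b] by simp
lemma am_power: "\<iota> (a ^ n) = \<iota> a ^ n"
  by (induction n) (simp_all add: am_1 am_mult)
lemma am_of_nat: "\<iota> (of_nat n) = of_nat n"
  by (induction n) (simp_all add: am_0 am_1 am_add)
lemma am_inverse: "a \<noteq> 0 \<Longrightarrow> \<iota> (inverse a) * \<iota> a = 1"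
  using am_mult[of "inverse a" a] am_1 by simp

lemmas am_simps = am_add am_mult am_1 am_0 am_uminus am_diff am_power am_of_nat

end

section \<open>Extracting the linear coefficient\<close>

lemma extract_linear:
  fixes \<sigma> :: "'k::field_char_0 \<Rightarrow> 'r::comm_ring_1" and S :: "'r set"
  assumes am: "alg_map \<sigma>"
    and sc: "\<And>c. \<sigma> c \<in> S"
    and ad: "\<And>x y. x \<in> S \<Longrightarrow> y \<in> S \<Longrightarrow> x + y \<in> S"
    and mu: "\<And>x y. x \<in> S \<Longrightarrow> y \<in> S \<Longrightarrow> x * y \<in> S"
  shows "N \<ge> 1 \<Longrightarrow> (\<And>t. (\<Sum>i\<le>N. \<sigma> t ^ i * v i) \<in> S) \<Longrightarrow> v 1 \<in> S"
proof (induction N arbitrary: v)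
  case 0
  then show ?case by simp
next
  case (Suc N)
  show ?case
  proof (cases "N = 0")
    case True
    have f1: "v 0 + v 1 \<in> S" using Suc.prems(2)[of 1] True by (simp add: am_simps[OF am])
    have f0: "v 0 \<in> S" using Suc.prems(2)[of 0] True by (simp add: am_simps[OF am])
    have "v 0 + v 1 + \<sigma> (-1) * v 0 \<in> S" using f1 f0 ad mu sc by blast
    then show ?thesis by (simp add: am_simps[OF am])
  next
    case False
    define c :: 'k where "c = 2 ^ Suc N"
    define w where "w i = \<sigma> (2 ^ i - c) * v i" for i
    have "(\<Sum>i\<le>N. \<sigma> t ^ i * w i) \<in> S" for t
    proof -
      have "(\<Sum>i\<le>Suc N. \<sigma> (2 * t) ^ i * v i) + \<sigma> (- c) * (\<Sum>i\<le>Suc N. \<sigma> t ^ i * v i) \<in> S"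
        using Suc.prems(2) ad mu sc by blast
      also have "(\<Sum>i\<le>Suc N. \<sigma> (2 * t) ^ i * v i) + \<sigma> (- c) * (\<Sum>i\<le>Suc N. \<sigma> t ^ i * v i)
          = (\<Sum>i\<le>Suc N. \<sigma> t ^ i * w i)"
        unfolding w_def sum_distrib_left sum.distrib[symmetric]
        by (rule sum.cong) (simp_all add: am_simps[OF am] power_mult_distrib algebra_simps)
      also have "\<dots> = (\<Sum>i\<le>N. \<sigma> t ^ i * w i)"
        by (simp add: w_def c_def am_simps[OF am])
      finally show ?thesis .
    qed
    then have "w 1 \<in> S" using Suc.IH False by simp
    then have "\<sigma> (inverse (2 - c)) * w 1 \<in> S" using mu sc by blast
    moreover have "2 - c \<noteq> 0"
    proof
      assume "2 - c = 0"
      then have "(of_nat (2 ^ Suc N) :: 'k) = of_nat 2" by (simp add: c_def)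
      then have "(2::nat) ^ Suc N = 2" using of_nat_eq_iff by blast
      moreover have "(2::nat) ^ Suc N \<ge> 2 ^ 2" using False
        by (intro power_increasing) auto
      ultimately show False by simp
    qed
    ultimately show ?thesis
      using am_inverse[OF am, of "2 - c"] unfolding w_def
      by (simp add: mult.assoc[symmetric])
  qed
qed



context
  fixes \<iota> :: "'k::field \<Rightarrow> 'b::idom" and \<delta> :: "'b \<Rightarrow> 'b"
  assumes der: "is_derivation \<iota> \<delta>"
begin

lemma der_add: "\<delta> (x + y) = \<delta> x + \<delta> y" using der unfolding is_derivation_def by blast
lemma der_scal: "\<delta> (\<iota> c * x) = \<iota> c * \<delta> x" using der unfolding is_derivation_def by blast
lemma der_mult: "\<delta> (x * y) = x * \<delta> y + y * \<delta> x" using der unfolding is_derivation_def by blast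
lemma der_0: "\<delta> 0 = 0" using der_add[of 0 0] by (metis add.right_neutral add_left_cancel)
lemma der_1: "\<delta> 1 = 0" using der_mult[of 1 1] by (metis mult_1 add.right_neutral add_left_cancel)
lemma der_sum: "\<delta> (sum f A) = (\<Sum>a\<in>A. \<delta> (f a))"
  using sum_comp_morphism[of \<delta> f A, OF der_0 der_add] by (simp add: comp_def)
lemma der_pow0: "(\<delta> ^^ n) 0 = 0"
  by (induction n) (simp_all add: der_0)
lemma der_mono: "(\<delta> ^^ n) x = 0 \<Longrightarrow> n \<le> m \<Longrightarrow> (\<delta> ^^ m) x = 0"
proof -
  assume a: "(\<delta> ^^ n) x = 0" "n \<le> m"
  then have "(\<delta> ^^ m) x = (\<delta> ^^ (m - n)) ((\<delta> ^^ n) x)"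
    by (metis funpow_add le_add_diff_inverse2 o_apply)
  then show ?thesis using a der_pow0 by simp
qed

definition Dp :: "'b poly \<Rightarrow> 'b poly" where
  "Dp p = pderiv p + map_poly \<delta> p"

lemma coeff_Dp: "coeff (Dp p) i = of_nat (Suc i) * coeff p (Suc i) + \<delta> (coeff p i)"
  by (simp add: Dp_def coeff_pderiv coeff_map_poly der_0)

lemma Dp_derivation: "is_derivation (\<lambda>c. [:\<iota> c:]) Dp"
  unfolding is_derivation_def
proof (intro conjI allI)
  fix x y :: "'b poly"
  show "Dp (x + y) = Dp x + Dp y"
    by (rule poly_eqI) (simp add: coeff_Dp der_add algebra_simps)
  show "Dp (x * y) = x * Dp y + y * Dp x"
  proof (rule poly_eqI)
    fix n
    have "coeff (Dp (x * y)) n = coeff (pderiv (x * y)) n + \<delta> (coeff (x * y) n)"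
      by (simp add: Dp_def coeff_map_poly der_0)
    also have "\<delta> (coeff (x * y) n) = coeff (x * map_poly \<delta> y) n + coeff (y * map_poly \<delta> x) n"
    proof -
      have e: "coeff (y * map_poly \<delta> x) n = coeff (map_poly \<delta> x * y) n" by (simp add: mult.commute)
      show ?thesis unfolding e unfolding coeff_mult
        by (simp add: der_sum der_mult coeff_map_poly der_0 sum.distrib mult.commute)
    qed
    finally show "coeff (Dp (x * y)) n = coeff (x * Dp y + y * Dp x) n"
      by (simp add: Dp_def pderiv_mult algebra_simps)
  qed
next
  fix c and x :: "'b poly"
  show "Dp ([:\<iota> c:] * x) = [:\<iota> c:] * Dp x"
    by (rule poly_eqI) (simp add: coeff_Dp der_scal algebra_simps)
qed

end



context
  fixes \<iota> :: "'k::field_char_0 \<Rightarrow> 'b::idom" and \<delta> :: "'b \<Rightarrow> 'b"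
  assumes am: "alg_map \<iota>" and lnd: "is_LND \<iota> \<delta>"
begin

lemma der: "is_derivation \<iota> \<delta>" using lnd unfolding is_LND_def by blast
lemma nil: "\<exists>n. (\<delta> ^^ n) x = 0" using lnd unfolding is_LND_def by blast

lemma Dp_step: "\<forall>i. (\<delta> ^^ (Suc r - i)) (coeff p i) = 0 \<Longrightarrow>
    \<forall>i. (\<delta> ^^ (r - i)) (coeff (Dp \<delta> p) i) = 0"
proof
  fix i
  assume h: "\<forall>i. (\<delta> ^^ (Suc r - i)) (coeff p i) = 0"
  have a: "(\<delta> ^^ (r - i)) (coeff p (Suc i)) = 0" using h[rule_format, of "Suc i"] by simp
  have "(\<delta> ^^ (r - i)) (\<delta> (coeff p i)) = 0"
  proof (cases "i \<le> r")
    case True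
    then have "Suc r - i = Suc (r - i)" by simp
    then show ?thesis using h[rule_format, of i] by (simp add: funpow_Suc_right del: funpow.simps)
  next
    case False
    then have "coeff p i = 0" using h[rule_format, of i] by simp
    then show ?thesis using der_0[OF der] der_pow0[OF der] by simp
  qed
  moreover have "(\<delta> ^^ n) (of_nat m * y) = of_nat m * (\<delta> ^^ n) y" for n m y
  proof (induction n)
    case (Suc n)
    have "\<delta> (of_nat m * z) = of_nat m * \<delta> z" for z
      using der_scal[OF der, of "of_nat m" z] by (simp add: am_of_nat[OF am])
    then show ?case using Suc by simp
  qed simp
  moreover have "(\<delta> ^^ n) (y + z) = (\<delta> ^^ n) y + (\<delta> ^^ n) z" for n y z
    by (induction n) (simp_all add: der_add[OF der])
  ultimately show "(\<delta> ^^ (r - i)) (coeff (Dp \<delta> p) i) = 0"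
    using a unfolding coeff_Dp[OF der] by (metis mult_zero_right add_0)
qed

lemma Dp_nil_r: "\<forall>i. (\<delta> ^^ (r - i)) (coeff p i) = 0 \<Longrightarrow> (Dp \<delta> ^^ r) p = 0"
proof (induction r arbitrary: p)
  case 0
  then show ?case by (simp add: poly_eqI)
next
  case (Suc r)
  have "(Dp \<delta> ^^ r) (Dp \<delta> p) = 0" using Suc.IH Dp_step[OF Suc.prems] by blast
  then show ?case by (simp add: funpow_Suc_right del: funpow.simps)
qed

lemma Dp_LND: "is_LND (\<lambda>c. [:\<iota> c:]) (Dp \<delta>)"
  unfolding is_LND_def
proof (intro conjI allI)
  show "is_derivation (\<lambda>c. [:\<iota> c:]) (Dp \<delta>)" by (rule Dp_derivation[OF der])
  fix p :: "'b poly"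
  have "\<forall>i. \<exists>n. (\<delta> ^^ n) (coeff p i) = 0" using nil by blast
  then obtain f where f: "\<And>i. (\<delta> ^^ f i) (coeff p i) = 0" by metis
  define M where "M = (\<Sum>i\<le>degree p. f i)"
  have "\<forall>i. (\<delta> ^^ (degree p + 1 + M - i)) (coeff p i) = 0"
  proof
    fix i
    show "(\<delta> ^^ (degree p + 1 + M - i)) (coeff p i) = 0"
    proof (cases "i \<le> degree p")
      case True
      then have "f i \<le> M" unfolding M_def by (intro member_le_sum) auto
      then show ?thesis using True der_mono[OF der f] by simp
    next
      case False
      then show ?thesis using der_pow0[OF der] by (simp add: coeff_eq_0)
    qed
  qed
  then show "\<exists>n. (Dp \<delta> ^^ n) p = 0" using Dp_nil_r by blast
qed

lemma Dp_slice: "has_slice (Dp \<delta>)"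
  unfolding has_slice_def
  by (rule exI[of _ "[:0, 1:]"], rule poly_eqI)
     (simp add: coeff_Dp[OF der] der_0[OF der] der_1[OF der] coeff_pCons split: nat.split)

definition ecoef :: "'b \<Rightarrow> nat \<Rightarrow> 'b" where
  "ecoef b i = \<iota> ((-1) ^ i / fact i) * (\<delta> ^^ i) b"

lemma ecoef_eq: "ecoef b i = \<iota> ((-1) ^ i / fact i) * (\<delta> ^^ i) b"
  by (simp add: ecoef_def)

lemma ecoef_fin: "\<exists>n. \<forall>i>n. ecoef b i = 0"
proof -
  obtain n where "(\<delta> ^^ n) b = 0" using nil by blast
  then show ?thesis unfolding ecoef_def using der_mono[OF der] by (metis less_imp_le mult_zero_right)
qed

lemma coeff_E: "coeff (Abs_poly (ecoef b)) = ecoef b"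
  using ecoef_fin[of b] coeff_Abs_poly by metis

lemma E_ker: "Dp \<delta> (Abs_poly (ecoef b)) = 0"
proof (rule poly_eqI)
  fix i
  have "of_nat (Suc i) * ecoef b (Suc i) = \<iota> (- ((-1) ^ i / fact i)) * (\<delta> ^^ Suc i) b"
  proof -
    have "(of_nat (Suc i) :: 'k) * ((-1) ^ Suc i / fact (Suc i)) = - ((-1) ^ i / fact i)"
      unfolding fact_Suc by (simp del: of_nat_Suc)
    then have "of_nat (Suc i) * \<iota> ((-1) ^ Suc i / fact (Suc i)) = \<iota> (- ((-1) ^ i / fact i))"
      using am_mult[OF am, of "of_nat (Suc i)"] am_of_nat[OF am, of "Suc i"] by metis
    then show ?thesis unfolding ecoef_def by (metis mult.assoc)
  qed
  moreover have "\<delta> (ecoef b i) = \<iota> ((-1) ^ i / fact i) * (\<delta> ^^ Suc i) b"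
    unfolding ecoef_def by (simp add: der_scal[OF der])
  ultimately show "coeff (Dp \<delta> (Abs_poly (ecoef b))) i = coeff 0 i"
    by (simp add: coeff_Dp[OF der] coeff_E am_uminus[OF am])
qed

end



lemma const_pow: "[:a:] ^ i = [:a ^ i:]"
  by (induction i) (simp_all add: one_pCons mult.commute)

lemma coeff_cm: "coeff ([:a:] ^ i * monom w i) n = (if i = n then a ^ i * w else 0)"
  by (simp add: const_pow coeff_monom)

theorem proposition1:
  fixes \<iota> :: "'k::field_char_0 \<Rightarrow> 'b::idom"
  assumes "alg_closed TYPE('k)"
    and "alg_map \<iota>"
    and "finitely_generated_alg \<iota>"
    and "LND_image_ideal \<iota> = UNIV"
  shows "HD_star (\<lambda>c. [:\<iota> c:]) = (UNIV :: 'b poly set)"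
proof -
  note am = assms(2)
  define \<sigma> where "\<sigma> = (\<lambda>c. [:\<iota> c:])"
  define S where "S = HD_star \<sigma>"
  have am\<sigma>: "alg_map \<sigma>" using am unfolding \<sigma>_def alg_map_def
    by (simp add: one_pCons)
  have sc: "\<sigma> c \<in> S" for c unfolding S_def HD_star_def by (rule subalg.scalar)
  have ad: "x + y \<in> S" if "x \<in> S" "y \<in> S" for x y
    using that unfolding S_def HD_star_def by (rule subalg.add)
  have mu: "x * y \<in> S" if "x \<in> S" "y \<in> S" for x y
    using that unfolding S_def HD_star_def by (rule subalg.mult)
  have ker: "p \<in> S" if "is_LND \<sigma> D" "has_slice D" "D p = 0" for D p
    unfolding S_def HD_star_def using that by (intro subalg.gen) blast
  have kerD: "p \<in> S" if "is_LND \<iota> \<delta>" "Dp \<delta> p = 0" for \<delta> p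
  proof -
    have "is_LND \<sigma> (Dp \<delta>)" unfolding \<sigma>_def by (rule Dp_LND[OF am that(1)])
    then show ?thesis using ker Dp_slice[OF am that(1)] that(2) by blast
  qed
  have lnd0: "is_LND \<iota> (\<lambda>_. 0)"
    unfolding is_LND_def is_derivation_def by (auto intro: exI[of _ 1])
  have const: "[:r:] \<in> S" for r
  proof (rule kerD[OF lnd0])
    show "Dp (\<lambda>_. 0) [:r:] = 0"
      by (rule poly_eqI) (simp add: coeff_Dp[OF lnd0[unfolded is_LND_def, THEN conjunct1]])
  qed
  have lin: "monom (dd b) 1 \<in> S" if lnd: "is_LND \<iota> dd" for dd b
  proof -
    have der: "is_derivation \<iota> dd" using lnd unfolding is_LND_def by blast
    define \<delta> where "\<delta> t = (\<lambda>y. \<iota> t * dd y)" for t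
    have pw: "(\<delta> t ^^ n) y = \<iota> t ^ n * (dd ^^ n) y" for t n y
    proof (induction n)
      case (Suc n)
      then show ?case
        by (simp add: \<delta>_def der_scal[OF der, of "t ^ n", unfolded am_power[OF am]])
    qed simp
    have lndt: "is_LND \<iota> (\<delta> t)" for t
      unfolding is_LND_def
    proof
      show "is_derivation \<iota> (\<delta> t)"
        unfolding is_derivation_def \<delta>_def
      proof (intro conjI allI)
        fix c x
        show "\<iota> t * dd (\<iota> c * x) = \<iota> c * (\<iota> t * dd x)"
          unfolding der_scal[OF der] by (simp add: algebra_simps)
      qed (simp_all add: der_add[OF der] der_mult[OF der] algebra_simps)
      show "\<forall>x. \<exists>n. (\<delta> t ^^ n) x = 0"
        using lnd unfolding is_LND_def pw by (metis mult_zero_right)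
    qed
    obtain N0 where N0: "(dd ^^ N0) b = 0" using lnd unfolding is_LND_def by blast
    define N where "N = Suc N0"
    have N: "(dd ^^ n) b = 0" if "n > N" for n
      using der_mono[OF der N0] that unfolding N_def by simp
    define w where "w i = \<iota> ((-1) ^ i / fact i) * (dd ^^ i) b" for i
    have "(\<Sum>i\<le>N. \<sigma> t ^ i * monom (w i) i) \<in> S" for t
    proof -
      have "Abs_poly (ecoef \<iota> (\<delta> t) b) \<in> S"
        by (rule kerD[OF lndt E_ker[OF am lndt]])
      also have "Abs_poly (ecoef \<iota> (\<delta> t) b) = (\<Sum>i\<le>N. \<sigma> t ^ i * monom (w i) i)"
      proof (rule poly_eqI)
        fix n
        show "coeff (Abs_poly (ecoef \<iota> (\<delta> t) b)) n = coeff (\<Sum>i\<le>N. \<sigma> t ^ i * monom (w i) i) n"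
          unfolding coeff_E[OF am lndt] coeff_sum \<sigma>_def coeff_cm
          unfolding ecoef_eq[OF am lndt] pw w_def using N[of n]
          by (auto simp: am_power[OF am])
      qed
      finally show ?thesis .
    qed
    then have "monom (w 1) 1 \<in> S"
      using extract_linear[OF am\<sigma> sc ad mu, of N "\<lambda>i. monom (w i) i"] unfolding N_def by simp
    then have "\<sigma> (-1) * monom (w 1) 1 \<in> S" using mu sc by blast
    then show ?thesis
      by (simp add: \<sigma>_def w_def am_simps[OF am] smult_monom)
  qed
  have ideal: "monom y 1 \<in> S" if "y \<in> LND_image_ideal \<iota>" for y
    using that unfolding LND_image_ideal_def
  proof (induction y rule: ideal_gen.induct)
    case zero
    then show ?case using const[of 0] by simp
  next
    case (gen t r)
    then obtain dd b where "is_LND \<iota> dd" "t = dd b" by blast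
    then have "[:r:] * monom t 1 \<in> S" using mu const lin by blast
    then show ?case by (simp add: smult_monom)
  next
    case (add x y)
    then show ?case using ad by (simp add: add_monom[symmetric])
  qed
  have X: "monom 1 1 \<in> S" using ideal assms(4) by blast
  have "p \<in> S" for p
  proof (induction p)
    case 0
    then show ?case using const[of 0] by simp
  next
    case (pCons a p)
    have "[:a:] + monom 1 1 * p \<in> S" using ad mu const X pCons by blast
    moreover have "[:a:] + monom 1 1 * p = pCons a p"
      by (rule poly_eqI) (simp add: coeff_monom_mult coeff_pCons split: nat.split)
    ultimately show ?case by simp
  qed
  then show ?thesis unfolding S_def \<sigma>_def by blast
qed

end
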